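(* Let $X$ be a locally convex space and let $h\in\mathscr{C}$. Then $[h=c]\subset[h^{\square}=c]$. If, in addition, $h\in\mathscr{D}$, then $[h=c]=[h^{\square}=c]$.
   Context: $X$ is a non-trivial Hausdorff locally convex space with topology $\tau$, $X^*$ its dual with weak-star topology $\omega^*$, $Z=X\times X^*$ with topology $\tau\times\omega^*$, $c(x,x^* )=\langle x,x^*\rangle$. The dual of $Z$ is identified with $Z$ via $z\cdot z'=\langle x,x'^*\rangle+\langle x',x^*\rangle$, and $f^{\square}(z)=\sup\{z\cdot z'-f(z')\mid z'\in Z\}$. $[f=g]=\{z\mid f(z)=g(z)\}$. $\mathscr{C}$ is the class of proper convex $f:Z\to\overline{\mathbb R}$ with $f\ge c$; $\mathscr{R}$ those in $\mathscr{C}$ that are $\tau\times\omega^*$-lsc; $\mathscr{D}=\{f\in\mathscr{R}\mid f^{\square}\ge c\}$. *)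

theory Defs
  imports "HOL-Analysis.Analysis"
begin

definition lcs :: "'a::real_vector topology \<Rightarrow> bool" where
  "lcs T \<longleftrightarrow> topspace T = UNIV \<and> Hausdorff_space T
     \<and> continuous_map (prod_topology T T) T (\<lambda>(x,y). x + y)
     \<and> continuous_map (prod_topology euclideanreal T) T (\<lambda>(a,x). a *\<^sub>R x)
     \<and> (\<forall>U. openin T U \<and> 0 \<in> U \<longrightarrow> (\<exists>V. openin T V \<and> convex V \<and> 0 \<in> V \<and> V \<subseteq> U))"

definition dual :: "'a::real_vector topology \<Rightarrow> ('a \<Rightarrow> real) set" where
  "dual T = {f. linear f \<and> continuous_map T euclideanreal f}"

definition wstar :: "'a::real_vector topology \<Rightarrow> ('a \<Rightarrow> real) topology" where
  "wstar T = subtopology (product_topology (\<lambda>_. euclideanreal) UNIV) (dual T)"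

definition Zset :: "'a::real_vector topology \<Rightarrow> ('a \<times> ('a \<Rightarrow> real)) set" where
  "Zset T = UNIV \<times> dual T"

definition Ztop :: "'a::real_vector topology \<Rightarrow> ('a \<times> ('a \<Rightarrow> real)) topology" where
  "Ztop T = prod_topology T (wstar T)"

text \<open>Coupling c(x,x^*) = <x,x^*> and the pairing z\<cdot>z'.\<close>
definition cpl :: "'a \<times> ('a \<Rightarrow> real) \<Rightarrow> real" where
  "cpl z = snd z (fst z)"

definition zdot :: "'a \<times> ('a \<Rightarrow> real) \<Rightarrow> 'a \<times> ('a \<Rightarrow> real) \<Rightarrow> real" where
  "zdot z z' = snd z' (fst z) + snd z (fst z')"

definition zcomb :: "real \<Rightarrow> 'a::real_vector \<times> ('a \<Rightarrow> real) \<Rightarrow> 'a \<times> ('a \<Rightarrow> real) \<Rightarrow> 'a \<times> ('a \<Rightarrow> real)" where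
  "zcomb t z z' = (t *\<^sub>R fst z + (1 - t) *\<^sub>R fst z', \<lambda>y. t * snd z y + (1 - t) * snd z' y)"

definition sqconj :: "'a::real_vector topology \<Rightarrow> ('a \<times> ('a \<Rightarrow> real) \<Rightarrow> ereal) \<Rightarrow> 'a \<times> ('a \<Rightarrow> real) \<Rightarrow> ereal" where
  "sqconj T f z = (SUP z'\<in>Zset T. ereal (zdot z z') - f z')"

definition eqset :: "'a::real_vector topology \<Rightarrow> ('a \<times> ('a \<Rightarrow> real) \<Rightarrow> ereal) \<Rightarrow> ('a \<times> ('a \<Rightarrow> real) \<Rightarrow> ereal) \<Rightarrow> ('a \<times> ('a \<Rightarrow> real)) set" where
  "eqset T f g = {z \<in> Zset T. f z = g z}"

definition proper_on :: "'b set \<Rightarrow> ('b \<Rightarrow> ereal) \<Rightarrow> bool" where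
  "proper_on S f \<longleftrightarrow> (\<forall>z\<in>S. f z \<noteq> -\<infinity>) \<and> (\<exists>z\<in>S. f z \<noteq> \<infinity>)"

text \<open>Convexity on Z (for functions not taking -\<infinity>, this is convexity of the epigraph).\<close>
definition convex_on_Z :: "'a::real_vector topology \<Rightarrow> ('a \<times> ('a \<Rightarrow> real) \<Rightarrow> ereal) \<Rightarrow> bool" where
  "convex_on_Z T f \<longleftrightarrow> (\<forall>z\<in>Zset T. \<forall>z'\<in>Zset T. \<forall>t::real. 0 < t \<and> t < 1 \<longrightarrow>
      f (zcomb t z z') \<le> ereal t * f z + ereal (1 - t) * f z')"

definition lsc_Z :: "'a::real_vector topology \<Rightarrow> ('a \<times> ('a \<Rightarrow> real) \<Rightarrow> ereal) \<Rightarrow> bool" where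
  "lsc_Z T f \<longleftrightarrow> (\<forall>r::real. closedin (Ztop T) {z \<in> Zset T. f z \<le> ereal r})"

definition classC :: "'a::real_vector topology \<Rightarrow> ('a \<times> ('a \<Rightarrow> real) \<Rightarrow> ereal) set" where
  "classC T = {f. proper_on (Zset T) f \<and> convex_on_Z T f \<and> (\<forall>z\<in>Zset T. ereal (cpl z) \<le> f z)}"

definition classR :: "'a::real_vector topology \<Rightarrow> ('a \<times> ('a \<Rightarrow> real) \<Rightarrow> ereal) set" where
  "classR T = {f \<in> classC T. lsc_Z T f}"

definition classD :: "'a::real_vector topology \<Rightarrow> ('a \<times> ('a \<Rightarrow> real) \<Rightarrow> ereal) set" where
  "classD T = {f \<in> classR T. \<forall>z\<in>Zset T. ereal (cpl z) \<le> sqconj T f z}"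

end

theory Submission
  imports Defs "HOL-Library.Function_Algebras"
begin


lemma small_t:
  fixes a b :: real
  assumes "\<And>t. 0 < t \<Longrightarrow> t < 1 \<Longrightarrow> a \<le> t * b"
  shows "a \<le> 0"
proof (rule ccontr)
  assume "\<not> a \<le> 0"
  then have a: "a > 0" by simp
  define t where "t = a / (2 * (\<bar>b\<bar> + a))"
  have t0: "t > 0" using a unfolding t_def by (simp add: add_pos_nonneg)
  have t1: "t < 1" using a unfolding t_def by (simp add: field_simps)
  have "t * b \<le> t * \<bar>b\<bar>" using t0 by (simp add: mult_left_mono)
  also have "t * \<bar>b\<bar> \<le> t * (\<bar>b\<bar> + a)" using t0 a by (simp add: mult_left_mono)
  also have "\<dots> = a/2" unfolding t_def
  proof -
    have "\<bar>b\<bar> + a > 0" using a by linarith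
    then show "a / (2 * (\<bar>b\<bar> + a)) * (\<bar>b\<bar> + a) = a / 2" by (simp add: field_simps)
  qed
  also have "\<dots> < a" using a by simp
  finally show False using assms[OF t0 t1] by simp
qed

lemma dual_comb:
  assumes "f \<in> dual T" "g \<in> dual T"
  shows "(\<lambda>y. a * f y + b * g y) \<in> dual T"
proof -
  have lf: "linear f" "linear g" and cf: "continuous_map T euclideanreal f" "continuous_map T euclideanreal g"
    using assms unfolding dual_def by auto
  have "linear (\<lambda>y. a * f y + b * g y)"
    by (rule linearI) (simp_all add: linear_add[OF lf(1)] linear_add[OF lf(2)] linear_scale[OF lf(1)]
        linear_scale[OF lf(2)] algebra_simps)
  moreover have "continuous_map T euclideanreal (\<lambda>y. a * f y + b * g y)"
    by (intro continuous_map_add continuous_map_real_mult_left cf)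
  ultimately show ?thesis unfolding dual_def by simp
qed

lemma zcomb_Zset:
  assumes "z \<in> Zset T" "z' \<in> Zset T"
  shows "zcomb t z z' \<in> Zset T"
  using assms dual_comb unfolding Zset_def zcomb_def by (auto simp: mem_Times_iff)

lemma cpl_zcomb:
  assumes "z \<in> Zset T" "z' \<in> Zset T"
  shows "cpl (zcomb t z z') = t*t * cpl z + t*(1-t) * zdot z z' + (1-t)*(1-t) * cpl z'"
proof -
  obtain x f x' g where z: "z = (x,f)" and z': "z' = (x',g)" by (cases z, cases z')
  have lf: "linear f" "linear g" using assms unfolding z z' Zset_def dual_def by auto
  have e1: "f (t *\<^sub>R x + (1 - t) *\<^sub>R x') = t * f x + (1-t) * f x'"
    by (simp add: linear_add[OF lf(1)] linear_scale[OF lf(1)])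
  have e2: "g (t *\<^sub>R x + (1 - t) *\<^sub>R x') = t * g x + (1-t) * g x'"
    by (simp add: linear_add[OF lf(2)] linear_scale[OF lf(2)])
  show ?thesis unfolding z z' zcomb_def cpl_def zdot_def
    by (simp only: fst_conv snd_conv e1 e2) (simp add: algebra_simps)
qed

lemma zdot_self: "zdot z z = 2 * cpl z"
  unfolding zdot_def cpl_def by simp

lemma part1:
  assumes hC: "h \<in> classC T" and zZ: "z \<in> Zset T" and hz: "h z = ereal (cpl z)"
  shows "sqconj T h z = ereal (cpl z)"
proof (rule antisym)
  have hprop: "\<forall>z\<in>Zset T. h z \<noteq> -\<infinity>" and cvx: "convex_on_Z T h"
    and ge: "\<forall>z\<in>Zset T. ereal (cpl z) \<le> h z"
    using hC unfolding classC_def proper_on_def by auto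
  show "sqconj T h z \<le> ereal (cpl z)"
    unfolding sqconj_def
  proof (rule SUP_least)
    fix z' assume z'Z: "z' \<in> Zset T"
    show "ereal (zdot z z') - h z' \<le> ereal (cpl z)"
    proof (cases "h z'")
      case PInf then show ?thesis by simp
    next
      case MInf then show ?thesis using hprop z'Z by simp
    next
      case (real H)
      have "zdot z z' - H - cpl z \<le> 0"
      proof (rule small_t)
        fix t :: real assume t0: "0 < t" and t1: "t < 1"
        have mZ: "zcomb t z' z \<in> Zset T" using zcomb_Zset z'Z zZ by blast
        have "h (zcomb t z' z) \<le> ereal t * h z' + ereal (1 - t) * h z"
          using cvx z'Z zZ t0 t1 unfolding convex_on_Z_def by blast
        also have "\<dots> = ereal (t * H + (1-t) * cpl z)" using real hz by simp
        finally have "ereal (cpl (zcomb t z' z)) \<le> ereal (t * H + (1-t) * cpl z)"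
          using ge mZ order_trans by blast
        then have i: "t*t * cpl z' + t*(1-t) * zdot z' z + (1-t)*(1-t) * cpl z \<le> t * H + (1-t) * cpl z"
          using cpl_zcomb[OF z'Z zZ, of t] by simp
        have sym: "zdot z' z = zdot z z'" unfolding zdot_def by simp
        have "t * ((1-t) * zdot z z') \<le> t * (H + (1-t) * cpl z - t * cpl z')"
          using i sym by (simp add: algebra_simps)
        then have "(1-t) * zdot z z' \<le> H + (1-t) * cpl z - t * cpl z'"
          using t0 by simp
        then show "zdot z z' - H - cpl z \<le> t * (zdot z z' - cpl z - cpl z')"
          by (simp add: algebra_simps)
      qed
      then show ?thesis using real by simp
    qed
  qed
next
  have "ereal (zdot z z) - h z \<le> sqconj T h z" unfolding sqconj_def using zZ by (rule SUP_upper)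
  moreover have "ereal (zdot z z) - h z = ereal (cpl z)" unfolding hz zdot_self by simp
  ultimately show "ereal (cpl z) \<le> sqconj T h z" by simp
qed



definition lingraph :: "('v::real_vector \<times> real) set \<Rightarrow> bool" where
 "lingraph G \<longleftrightarrow> (0,0) \<in> G \<and> (\<forall>x a y b. (x,a)\<in>G \<longrightarrow> (y,b)\<in>G \<longrightarrow> (x+y,a+b)\<in>G)
   \<and> (\<forall>x a c. (x,a)\<in>G \<longrightarrow> (c *\<^sub>R x, c*a)\<in>G) \<and> (\<forall>x a b. (x,a)\<in>G \<longrightarrow> (x,b)\<in>G \<longrightarrow> a=b)"

lemma hb_step_bound:
  fixes U :: "'v::real_vector set"
  assumes G: "lingraph G" and cvx: "convex U"
    and dom: "\<forall>x a. (x,a)\<in>G \<longrightarrow> x\<in>U \<longrightarrow> a \<le> 1"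
    and xa: "(x,a) \<in> G" and t: "t > 0" and xt: "x + t *\<^sub>R x0 \<in> U"
    and yb: "(y,b) \<in> G" and s: "s > 0" and ys: "y - s *\<^sub>R x0 \<in> U"
  shows "(b - 1)/s \<le> (1 - a)/t"
proof -
  have "(t/(s+t)) *\<^sub>R (y - s *\<^sub>R x0) + (s/(s+t)) *\<^sub>R (x + t *\<^sub>R x0) \<in> U"
    using cvx ys xt s t unfolding convex_def
    by (metis (no_types, lifting) add_divide_distrib add_pos_pos divide_nonneg_nonneg
        divide_self_if less_eq_real_def not_less_iff_gr_or_eq add.commute)
  moreover have "(t/(s+t)) *\<^sub>R (y - s *\<^sub>R x0) + (s/(s+t)) *\<^sub>R (x + t *\<^sub>R x0)
      = (1/(s+t)) *\<^sub>R (t *\<^sub>R y + s *\<^sub>R x)"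
    using s t by (simp add: algebra_simps)
  moreover have "((1/(s+t)) *\<^sub>R (t *\<^sub>R y + s *\<^sub>R x), (1/(s+t)) * (t*b + s*a)) \<in> G"
    using G xa yb unfolding lingraph_def by blast
  ultimately have "(1/(s+t)) * (t*b + s*a) \<le> 1" using dom by metis
  then have "t*b + s*a \<le> s + t" using s t by (simp add: field_simps)
  then show ?thesis using s t by (simp add: field_simps)
qed

lemma hb_sep:
  fixes U :: "'v::real_vector set"
  assumes cvx: "convex U" and U0: "0 \<in> U"
    and absb: "\<And>d. \<exists>t>0. t *\<^sub>R d \<in> U"
    and y0: "y0 \<notin> U"
  shows "\<exists>F::'v\<Rightarrow>real. linear F \<and> F y0 = 1 \<and> (\<forall>u\<in>U. F u \<le> 1)"
proof -
  define G0 where "G0 = {(t *\<^sub>R y0, t) | t. True}"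
  define A where "A = {G. lingraph G \<and> G0 \<subseteq> G \<and> (\<forall>x a. (x,a)\<in>G \<longrightarrow> x\<in>U \<longrightarrow> a \<le> 1)}"
  have y0nz: "y0 \<noteq> 0" using U0 y0 by auto
  have G0A: "G0 \<in> A"
  proof -
    have "lingraph G0" unfolding lingraph_def G0_def
    proof (intro conjI allI impI)
      show "(0, 0) \<in> {(t *\<^sub>R y0, t) |t. True}" by force
    next
      fix x a y b assume "(x,a) \<in> {(t *\<^sub>R y0, t) |t. True}" "(y,b) \<in> {(t *\<^sub>R y0, t) |t. True}"
      then show "(x+y, a+b) \<in> {(t *\<^sub>R y0, t) |t. True}" by (auto simp: scaleR_add_left)
    next
      fix x a c assume "(x,a) \<in> {(t *\<^sub>R y0, t) |t. True}"
      then show "(c *\<^sub>R x, c*a) \<in> {(t *\<^sub>R y0, t) |t. True}" by auto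
    next
      fix x a b assume "(x,a) \<in> {(t *\<^sub>R y0, t) |t. True}" "(x,b) \<in> {(t *\<^sub>R y0, t) |t. True}"
      then show "a = b" using y0nz by auto
    qed
    moreover have "a \<le> 1" if "(x,a) \<in> G0" "x \<in> U" for x a
    proof (rule ccontr)
      assume "\<not> a \<le> 1"
      then have a1: "a > 1" by simp
      have xa: "x = a *\<^sub>R y0" using that(1) unfolding G0_def by auto
      have "(1/a) *\<^sub>R x + (1 - 1/a) *\<^sub>R 0 \<in> U"
        using convexD[OF cvx that(2) U0, of "1/a" "1-1/a"] a1 by simp
      then have "y0 \<in> U" using xa a1 by simp
      then show False using y0 by simp
    qed
    ultimately show ?thesis unfolding A_def by blast
  qed
  have "\<exists>M\<in>A. \<forall>X\<in>A. M \<subseteq> X \<longrightarrow> X = M"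
  proof (rule Zorn_Lemma2, intro ballI)
    fix C assume C: "C \<in> chains A"
    show "\<exists>V\<in>A. \<forall>X\<in>C. X \<subseteq> V"
    proof (cases "C = {}")
      case True then show ?thesis using G0A by auto
    next
      case False
      have CA: "C \<subseteq> A" using C unfolding chains_def by auto
      have ch: "\<And>X Y. X \<in> C \<Longrightarrow> Y \<in> C \<Longrightarrow> X \<subseteq> Y \<or> Y \<subseteq> X" using C chainsD by blast
      have two: "\<exists>X\<in>C. p \<in> X \<and> q \<in> X" if "p \<in> \<Union>C" "q \<in> \<Union>C" for p q
        using that ch by blast
      have lg: "\<And>X. X \<in> C \<Longrightarrow> lingraph X" using CA unfolding A_def by auto
      have "lingraph (\<Union>C)" unfolding lingraph_def
      proof (intro conjI allI impI)
        obtain X where "X \<in> C" using False by auto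
        then show "(0,0) \<in> \<Union>C" using lg[of X] unfolding lingraph_def by auto
      next
        fix x a y b assume "(x,a) \<in> \<Union>C" "(y,b) \<in> \<Union>C"
        then obtain X where "X\<in>C" "(x,a)\<in>X" "(y,b)\<in>X" using two by blast
        then show "(x+y,a+b) \<in> \<Union>C" using lg[of X] unfolding lingraph_def by blast
      next
        fix x a c assume "(x,a) \<in> \<Union>C"
        then obtain X where "X\<in>C" "(x,a)\<in>X" by blast
        then show "(c *\<^sub>R x, c*a) \<in> \<Union>C" using lg[of X] unfolding lingraph_def by blast
      next
        fix x a b assume "(x,a) \<in> \<Union>C" "(x,b) \<in> \<Union>C"
        then obtain X where "X\<in>C" "(x,a)\<in>X" "(x,b)\<in>X" using two by blast
        then show "a = b" using lg[of X] unfolding lingraph_def by blast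
      qed
      moreover have "G0 \<subseteq> \<Union>C" using False CA unfolding A_def by blast
      moreover have "\<forall>x a. (x,a)\<in>\<Union>C \<longrightarrow> x\<in>U \<longrightarrow> a \<le> 1" using CA unfolding A_def by blast
      ultimately show ?thesis unfolding A_def by blast
    qed
  qed
  then obtain M where MA: "M \<in> A" and Mmax: "\<And>X. X \<in> A \<Longrightarrow> M \<subseteq> X \<Longrightarrow> X = M" by blast
  have Mlg: "lingraph M" and G0M: "G0 \<subseteq> M" and Mdom: "\<forall>x a. (x,a)\<in>M \<longrightarrow> x\<in>U \<longrightarrow> a \<le> 1"
    using MA unfolding A_def by auto
  have M0: "(0,0) \<in> M" and Madd: "\<And>x a y b. (x,a)\<in>M \<Longrightarrow> (y,b)\<in>M \<Longrightarrow> (x+y,a+b)\<in>M"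
    and Msc: "\<And>x a c. (x,a)\<in>M \<Longrightarrow> (c *\<^sub>R x, c*a)\<in>M"
    and Mfun: "\<And>x a b. (x,a)\<in>M \<Longrightarrow> (x,b)\<in>M \<Longrightarrow> a=b"
    using Mlg unfolding lingraph_def by blast+
  have total: "\<exists>a. (x0,a) \<in> M" for x0
  proof (rule ccontr)
    assume nx: "\<nexists>a. (x0, a) \<in> M"
    define Lo where "Lo = {(a - 1)/s | x a s. (x,a)\<in>M \<and> s>0 \<and> x - s *\<^sub>R x0 \<in> U}"
    define c where "c = Sup Lo"
    obtain s0 where s0: "s0 > 0" "s0 *\<^sub>R (-x0) \<in> U" using absb by blast
    obtain t0 where t0: "t0 > 0" "t0 *\<^sub>R x0 \<in> U" using absb by blast
    have Lone: "Lo \<noteq> {}" unfolding Lo_def using M0 s0 by force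
    have Lub: "l \<le> (1-a)/t" if "l \<in> Lo" "(x,a)\<in>M" "t>0" "x + t *\<^sub>R x0 \<in> U" for l x a t
      using that hb_step_bound[OF Mlg cvx Mdom] unfolding Lo_def by blast
    have Lbdd: "bdd_above Lo" using Lub[of _ 0 0 t0] M0 t0 unfolding bdd_above_def by auto
    define M' where "M' = {(x + t *\<^sub>R x0, a + t*c) | x a t. (x,a)\<in>M}"
    have MM': "M \<subseteq> M'" unfolding M'_def by force
    have x0M': "(x0, c) \<in> M'" unfolding M'_def using M0 by force
    have "lingraph M'" unfolding lingraph_def
    proof (intro conjI allI impI)
      show "(0,0) \<in> M'" using MM' M0 by auto
    next
      fix x a y b assume "(x,a) \<in> M'" "(y,b) \<in> M'"
      then obtain x1 a1 t1 x2 a2 t2 where "(x1,a1)\<in>M" "(x2,a2)\<in>M" "x = x1 + t1 *\<^sub>R x0" "a = a1 + t1*c"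
        "y = x2 + t2 *\<^sub>R x0" "b = a2 + t2*c" unfolding M'_def by blast
      moreover have "x1 + t1 *\<^sub>R x0 + (x2 + t2 *\<^sub>R x0) = (x1 + x2) + (t1+t2) *\<^sub>R x0"
        by (simp add: algebra_simps)
      moreover have "a1 + t1*c + (a2 + t2*c) = (a1+a2) + (t1+t2)*c" by (simp add: algebra_simps)
      ultimately show "(x+y,a+b) \<in> M'" unfolding M'_def using Madd by blast
    next
      fix x a r assume "(x,a) \<in> M'"
      then obtain x1 a1 t1 where "(x1,a1)\<in>M" "x = x1 + t1 *\<^sub>R x0" "a = a1 + t1*c"
        unfolding M'_def by blast
      moreover have "r *\<^sub>R (x1 + t1 *\<^sub>R x0) = r *\<^sub>R x1 + (r*t1) *\<^sub>R x0" by (simp add: algebra_simps)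
      moreover have "r * (a1 + t1*c) = r*a1 + (r*t1)*c" by (simp add: algebra_simps)
      ultimately show "(r *\<^sub>R x, r*a) \<in> M'" unfolding M'_def using Msc by blast
    next
      fix x a b assume "(x,a) \<in> M'" "(x,b) \<in> M'"
      then obtain x1 a1 t1 x2 a2 t2 where m1: "(x1,a1)\<in>M" and m2: "(x2,a2)\<in>M" and
        e: "x = x1 + t1 *\<^sub>R x0" "a = a1 + t1*c" "x = x2 + t2 *\<^sub>R x0" "b = a2 + t2*c"
        unfolding M'_def by blast
      have d: "(x2 - x1, a2 - a1) \<in> M"
        using Madd[OF m2 Msc[OF m1, of "-1"]] by simp
      have "t1 = t2"
      proof (rule ccontr)
        assume ne: "t1 \<noteq> t2"
        have "x2 - x1 = (t1 - t2) *\<^sub>R x0" using e by (simp add: algebra_simps)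
        then have "(1/(t1-t2)) *\<^sub>R (x2 - x1) = x0" using ne by simp
        then have "(x0, (1/(t1-t2)) * (a2 - a1)) \<in> M" using Msc[OF d] by metis
        then show False using nx by blast
      qed
      then have "x1 = x2" using e by simp
      then have "a1 = a2" using Mfun m1 m2 by blast
      then show "a = b" using e \<open>t1 = t2\<close> by simp
    qed
    moreover have "G0 \<subseteq> M'" using G0M MM' by blast
    moreover have "\<forall>x a. (x,a)\<in>M' \<longrightarrow> x\<in>U \<longrightarrow> a \<le> 1"
    proof (intro allI impI)
      fix x a assume "(x,a) \<in> M'" "x \<in> U"
      then obtain x1 a1 t where m1: "(x1,a1)\<in>M" and e: "x = x1 + t *\<^sub>R x0" "a = a1 + t*c"
        unfolding M'_def by blast
      consider "t = 0" | "t > 0" | "t < 0" by linarith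
      then show "a \<le> 1"
      proof cases
        case 1 then show ?thesis using Mdom m1 e \<open>x\<in>U\<close> by auto
      next
        case 2
        have "c \<le> (1 - a1)/t" unfolding c_def
          using Lone Lub[OF _ m1 2] e \<open>x\<in>U\<close> by (auto intro: cSup_least)
        then show ?thesis using 2 e by (simp add: field_simps)
      next
        case 3
        have "x1 - (-t) *\<^sub>R x0 \<in> U" using e \<open>x\<in>U\<close> by simp
        moreover have "-t > 0" using 3 by simp
        ultimately have "(a1 - 1)/(-t) \<in> Lo" unfolding Lo_def using m1 by blast
        then have "(a1 - 1)/(-t) \<le> c" unfolding c_def using Lbdd by (rule cSup_upper)
        then show ?thesis using 3 e by (simp add: field_simps)
      qed
    qed
    ultimately have "M' \<in> A" unfolding A_def by blast
    then have "M' = M" using Mmax MM' by blast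
    then show False using x0M' nx by blast
  qed
  define F where "F x = (THE a. (x,a) \<in> M)" for x
  have FM: "(x, F x) \<in> M" for x
    unfolding F_def using total[of x] Mfun by (metis theI)
  have Fu: "(x,a) \<in> M \<Longrightarrow> F x = a" for x a using FM Mfun by blast
  have "linear F"
  proof (rule linearI)
    show "F (x + y) = F x + F y" for x y using Fu[OF Madd[OF FM FM]] .
    show "F (r *\<^sub>R x) = r *\<^sub>R F x" for r x using Fu[OF Msc[OF FM]] by simp
  qed
  moreover have "F y0 = 1" using G0M Fu unfolding G0_def by force
  moreover have "\<forall>u\<in>U. F u \<le> 1" using Mdom FM by blast
  ultimately show ?thesis by (intro exI[of _ F]) simp
qed



instantiation "fun" :: (type, real_vector) real_vector
begin
definition scaleR_fun :: "real \<Rightarrow> ('a \<Rightarrow> 'b) \<Rightarrow> 'a \<Rightarrow> 'b" where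
  "scaleR_fun c f = (\<lambda>x. c *\<^sub>R f x)"
instance by standard (auto simp: scaleR_fun_def plus_fun_def algebra_simps)
end

lemma scaleR_fun_apply [simp]: "(c *\<^sub>R f) x = c *\<^sub>R f x"
  by (simp add: scaleR_fun_def)

lemma sum_fun_apply: "finite S \<Longrightarrow> (sum F S) y = sum (\<lambda>i. F i y) S"
  by (induction S rule: finite_induct) auto

lemma lcs_topspace: "lcs T \<Longrightarrow> topspace T = UNIV"
  unfolding lcs_def by simp

lemma lcs_cont_add: assumes "lcs T" shows "continuous_map T T (\<lambda>x. x + b)"
proof -
  have "continuous_map T (prod_topology T T) (\<lambda>x. (x, b))"
    using assms by (intro continuous_map_pairedI) (auto simp: lcs_topspace)
  moreover have "continuous_map (prod_topology T T) T (\<lambda>(x,y). x + y)" using assms unfolding lcs_def by simp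
  ultimately show ?thesis using continuous_map_compose by (fastforce simp: o_def)
qed

lemma lcs_cont_scale: assumes "lcs T" shows "continuous_map T T (\<lambda>x. a *\<^sub>R x)"
proof -
  have "continuous_map T (prod_topology euclideanreal T) (\<lambda>x. (a, x))"
    using assms by (intro continuous_map_pairedI) auto
  moreover have "continuous_map (prod_topology euclideanreal T) T (\<lambda>(a,x). a *\<^sub>R x)" using assms unfolding lcs_def by simp
  ultimately show ?thesis using continuous_map_compose by (fastforce simp: o_def)
qed

lemma lcs_cont_ray: assumes "lcs T" shows "continuous_map euclideanreal T (\<lambda>t. t *\<^sub>R d)"
proof -
  have "continuous_map euclideanreal (prod_topology euclideanreal T) (\<lambda>t. (t, d))"
    using assms by (intro continuous_map_pairedI) (auto simp: lcs_topspace)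
  moreover have "continuous_map (prod_topology euclideanreal T) T (\<lambda>(a,x). a *\<^sub>R x)" using assms unfolding lcs_def by simp
  ultimately show ?thesis using continuous_map_compose by (fastforce simp: o_def)
qed

lemma lcs_open_pre: assumes "lcs T" "continuous_map T T f" "openin T V" shows "openin T {x. f x \<in> V}"
  using openin_continuous_map_preimage[OF assms(2,3)] lcs_topspace[OF assms(1)] by simp

lemma lcs_absorb:
  assumes "lcs T" "openin T V" "0 \<in> V"
  shows "\<exists>e>0. \<forall>t. \<bar>t\<bar> < e \<longrightarrow> t *\<^sub>R d \<in> V"
proof -
  have "openin euclideanreal {t \<in> topspace euclideanreal. t *\<^sub>R d \<in> V}"
    by (rule openin_continuous_map_preimage[OF lcs_cont_ray[OF assms(1)] assms(2)])
  then have "open {t. t *\<^sub>R d \<in> V}" by simp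
  moreover have "0 \<in> {t. t *\<^sub>R d \<in> V}" using assms(3) by simp
  ultimately obtain e where "e > 0" "ball 0 e \<subseteq> {t. t *\<^sub>R d \<in> V}" using openE by blast
  then show ?thesis
    by (intro exI[of _ e]) (auto simp: dist_real_def subset_iff)
qed

lemma bounded_lin_cont:
  fixes L :: "'a::real_vector \<Rightarrow> real"
  assumes T: "lcs T" and L: "linear L" and V: "openin T V" "0 \<in> V" and B: "\<forall>y\<in>V. \<bar>L y\<bar> \<le> M"
  shows "continuous_map T euclideanreal L"
  unfolding continuous_map_def
proof (intro conjI allI impI)
  show "L \<in> topspace T \<rightarrow> topspace euclideanreal" by simp
next
  fix U :: "real set" assume "openin euclideanreal U"
  then have oU: "open U" by simp
  show "openin T {x \<in> topspace T. L x \<in> U}"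
  proof (subst openin_subopen, intro ballI)
    fix x assume "x \<in> {x \<in> topspace T. L x \<in> U}"
    then have LxU: "L x \<in> U" by simp
    obtain e where e: "e > 0" "ball (L x) e \<subseteq> U" using openE[OF oU LxU] by blast
    have M0: "M \<ge> 0" using B V(2) by force
    define c where "c = e / (M + 1)"
    have c0: "c > 0" unfolding c_def using e M0 by simp
    define N where "N = {y. (1/c) *\<^sub>R (y + (- x)) \<in> V}"
    have "continuous_map T T (\<lambda>y. (1/c) *\<^sub>R (y + (- x)))"
      using continuous_map_compose[OF lcs_cont_add[OF T, of "-x"] lcs_cont_scale[OF T, of "1/c"]]
      by (simp add: o_def)
    then have oN: "openin T N" unfolding N_def by (rule lcs_open_pre[OF T _ V(1)])
    have xN: "x \<in> N" unfolding N_def using V(2) by simp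
    have "N \<subseteq> {x \<in> topspace T. L x \<in> U}"
    proof
      fix y assume "y \<in> N"
      then have "\<bar>L ((1/c) *\<^sub>R (y + (- x)))\<bar> \<le> M" using B unfolding N_def by blast
      then have "\<bar>(1/c) * (L y - L x)\<bar> \<le> M"
        by (simp add: linear_scale[OF L] linear_add[OF L] linear_neg[OF L] linear_diff[OF L])
      then have "\<bar>L y - L x\<bar> \<le> c * M" using c0 by (simp add: abs_mult field_simps)
      also have "c * M < e" unfolding c_def using e M0 by (simp add: field_simps)
      finally have "L y \<in> ball (L x) e" by (simp add: dist_real_def abs_minus_commute)
      then show "y \<in> {x \<in> topspace T. L x \<in> U}" using e lcs_topspace[OF T] by auto
    qed
    then show "\<exists>N. openin T N \<and> x \<in> N \<and> N \<subseteq> {x \<in> topspace T. L x \<in> U}" using oN xN by blast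
  qed
qed



lemma part2_contra:
  assumes hD: "h \<in> classD T" and z0Z: "z0 \<in> Zset T" and vZ: "v \<in> Zset T" and b: "b > 0"
    and H: "\<forall>z'\<in>Zset T. ereal (zdot z0 z' - cpl z0) \<le> h z'"
    and Mi: "\<forall>z'\<in>Zset T. ereal (zdot z0 z' - cpl z0 + zdot v z' - zdot v z0 + b) \<le> h z'"
  shows False
proof -
  obtain x0 f0 where z0: "z0 = (x0, f0)" by (cases z0)
  obtain y gv where v: "v = (y, gv)" by (cases v)
  have f0d: "f0 \<in> dual T" and gvd: "gv \<in> dual T" using z0Z vZ unfolding z0 v Zset_def by auto
  have lf0: "linear f0" and lgv: "linear gv" using f0d gvd unfolding dual_def by auto
  have D: "\<forall>z\<in>Zset T. ereal (cpl z) \<le> sqconj T h z" using hD unfolding classD_def by auto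
  have key: "t * cpl v + b \<le> 0" if t0: "0 < t" and t1: "t < 1" for t
  proof -
    define u where "u = (x0 + t *\<^sub>R y, \<lambda>a. 1 * f0 a + t * gv a)"
    have uZ: "u \<in> Zset T" unfolding u_def Zset_def using dual_comb[OF f0d gvd, of 1 t] by simp
    have cu: "cpl u = cpl z0 + t * zdot v z0 + t*t * cpl v"
      unfolding u_def cpl_def zdot_def z0 v
      by (simp add: linear_add[OF lf0] linear_add[OF lgv] linear_scale[OF lf0] linear_scale[OF lgv] algebra_simps)
    have "sqconj T h u \<le> ereal (cpl z0 + t * zdot v z0 - t * b)"
      unfolding sqconj_def
    proof (rule SUP_least)
      fix z' assume z'Z: "z' \<in> Zset T"
      obtain x' g where z': "z' = (x', g)" by (cases z')
      have lg: "linear g" using z'Z unfolding z' Zset_def dual_def by auto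
      have zu: "zdot u z' = zdot z0 z' + t * zdot v z'"
        unfolding u_def zdot_def z0 v z'
        by (simp add: linear_add[OF lg] linear_scale[OF lg] algebra_simps)
      show "ereal (zdot u z') - h z' \<le> ereal (cpl z0 + t * zdot v z0 - t * b)"
      proof (cases "h z'")
        case (real hh)
        have a1: "zdot z0 z' - cpl z0 \<le> hh" using H z'Z real by force
        have a2: "zdot z0 z' - cpl z0 + zdot v z' - zdot v z0 + b \<le> hh" using Mi z'Z real by force
        have "(1-t) * (zdot z0 z' - cpl z0) + t * (zdot z0 z' - cpl z0 + zdot v z' - zdot v z0 + b)
             \<le> (1-t) * hh + t * hh"
          using a1 a2 t0 t1 by (intro add_mono mult_left_mono) auto
        then have "zdot u z' - hh \<le> cpl z0 + t * zdot v z0 - t * b"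
          unfolding zu by (simp add: algebra_simps)
        then show ?thesis using real by simp
      next
        case PInf then show ?thesis by simp
      next
        case MInf then show ?thesis using H z'Z by force
      qed
    qed
    moreover have "ereal (cpl u) \<le> sqconj T h u" using D uZ by blast
    ultimately have "cpl u \<le> cpl z0 + t * zdot v z0 - t * b" by (meson ereal_less_eq(3) order_trans)
    then have "t * (t * cpl v + b) \<le> t * 0" unfolding cu by (simp add: algebra_simps)
    then show ?thesis using t0 by (simp add: mult_le_0_iff)
  qed
  have "b \<le> 0"
  proof (rule small_t)
    fix t :: real assume "0 < t" "t < 1"
    then have "t * cpl v + b \<le> 0" using key by blast
    then show "b \<le> t * (- cpl v)" by simp
  qed
  then show False using b by simp
qed



lemma topspace_Ztop: "lcs T \<Longrightarrow> topspace (Ztop T) = Zset T"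
  unfolding Ztop_def wstar_def Zset_def by (simp add: lcs_topspace)

lemma nbhd:
  assumes T: "lcs T" and hR: "h \<in> classR T" and z0Z: "(x0, f0) \<in> Zset T" and r: "ereal r < h (x0, f0)"
  shows "\<exists>V0 Fs \<delta>. openin T V0 \<and> convex V0 \<and> 0 \<in> V0 \<and> (\<forall>y\<in>V0. -y \<in> V0) \<and> finite Fs \<and> \<delta> > 0 \<and>
     (\<forall>x g. x - x0 \<in> V0 \<longrightarrow> g \<in> dual T \<longrightarrow> (\<forall>i\<in>Fs. \<bar>g i - f0 i\<bar> < \<delta>) \<longrightarrow> ereal r < h (x,g))"
proof -
  have "closedin (Ztop T) {z \<in> Zset T. h z \<le> ereal r}" using hR unfolding classR_def lsc_Z_def by auto
  then have "openin (Ztop T) (topspace (Ztop T) - {z \<in> Zset T. h z \<le> ereal r})" by auto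
  moreover have "topspace (Ztop T) - {z \<in> Zset T. h z \<le> ereal r} = {z \<in> Zset T. ereal r < h z}"
    unfolding topspace_Ztop[OF T] by (auto simp: not_le)
  ultimately have oS: "openin (prod_topology T (wstar T)) {z \<in> Zset T. ereal r < h z}"
    unfolding Ztop_def by simp
  define S where "S = {z \<in> Zset T. ereal r < h z}"
  have mem: "(x0, f0) \<in> S" unfolding S_def using z0Z r by simp
  have all: "\<forall>x y. (x,y) \<in> S \<longrightarrow> (\<exists>U V. openin T U \<and> openin (wstar T) V \<and> x \<in> U \<and> y \<in> V \<and> U \<times> V \<subseteq> S)"
    using oS unfolding S_def by (simp only: openin_prod_topology_alt)
  have "\<exists>U V. openin T U \<and> openin (wstar T) V \<and> x0 \<in> U \<and> f0 \<in> V \<and> U \<times> V \<subseteq> S"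
    using all mem by blast
  then obtain U G where U: "openin T U" and G: "openin (wstar T) G" and x0U: "x0 \<in> U" and f0G: "f0 \<in> G"
    and UG: "U \<times> G \<subseteq> S" by blast
  have "\<exists>G'. openin (product_topology (\<lambda>_. euclideanreal) UNIV) G' \<and> G = G' \<inter> dual T"
    using G unfolding wstar_def by (simp only: openin_subtopology)
  then obtain G' where G': "openin (product_topology (\<lambda>_. euclideanreal) UNIV) G'" and GG': "G = G' \<inter> dual T"
    by blast
  have f0G': "f0 \<in> G'" using f0G GG' by blast
  obtain Xs where f0X: "f0 \<in> (\<Pi>\<^sub>E i\<in>UNIV. Xs i)" and oX: "\<forall>i. openin euclideanreal (Xs i)"
    and fin: "finite {i. Xs i \<noteq> topspace euclideanreal}" and XG: "(\<Pi>\<^sub>E i\<in>UNIV. Xs i) \<subseteq> G'"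
    using product_topology_open_contains_basis[OF G' f0G'] by blast
  define Fs where "Fs = {i. Xs i \<noteq> UNIV}"
  have finF: "finite Fs" using fin unfolding Fs_def by simp
  have "\<forall>i\<in>Fs. \<exists>e>0. ball (f0 i) e \<subseteq> Xs i"
  proof
    fix i have "open (Xs i)" using oX by simp
    moreover have "f0 i \<in> Xs i" using f0X by auto
    ultimately show "\<exists>e>0. ball (f0 i) e \<subseteq> Xs i" using openE by blast
  qed
  then obtain ee where ee: "\<forall>i\<in>Fs. ee i > 0 \<and> ball (f0 i) (ee i) \<subseteq> Xs i" by metis
  define \<delta> where "\<delta> = Min (insert 1 (ee ` Fs))"
  have d0: "\<delta> > 0" unfolding \<delta>_def using finF ee by (subst Min_gr_iff) auto
  have dle: "\<delta> \<le> ee i" if "i \<in> Fs" for i unfolding \<delta>_def using finF that by (intro Min_le) auto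
  define V1 where "V1 = {y. y + x0 \<in> U}"
  have oV1: "openin T V1" unfolding V1_def by (rule lcs_open_pre[OF T lcs_cont_add[OF T] U])
  have "0 \<in> V1" unfolding V1_def using x0U by simp
  then obtain V2 where oV2: "openin T V2" and cV2: "convex V2" and V20: "0 \<in> V2" and V21: "V2 \<subseteq> V1"
    using T oV1 unfolding lcs_def by blast
  define V0 where "V0 = V2 \<inter> {y. (-1) *\<^sub>R y \<in> V2}"
  have oV0: "openin T V0" unfolding V0_def
    by (intro openin_Int oV2 lcs_open_pre[OF T lcs_cont_scale[OF T] oV2])
  have cV0: "convex V0" unfolding V0_def
  proof (intro convex_Int cV2)
    have "{y. (-1) *\<^sub>R y \<in> V2} = (\<lambda>y. (-1) *\<^sub>R y) ` V2" by (force simp: image_iff)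
    then show "convex {y. (-1) *\<^sub>R y \<in> V2}" using convex_negations[OF cV2] by simp
  qed
  have V00: "0 \<in> V0" unfolding V0_def using V20 by simp
  have sym: "\<forall>y\<in>V0. -y \<in> V0" unfolding V0_def by auto
  have key: "ereal r < h (x,g)" if "x - x0 \<in> V0" "g \<in> dual T" "\<forall>i\<in>Fs. \<bar>g i - f0 i\<bar> < \<delta>" for x g
  proof -
    have "x \<in> U" using that(1) V21 unfolding V0_def V1_def by auto
    moreover have "g \<in> (\<Pi>\<^sub>E i\<in>UNIV. Xs i)"
    proof (simp add: PiE_iff, intro allI)
      fix i show "g i \<in> Xs i"
      proof (cases "i \<in> Fs")
        case True
        then have "\<bar>g i - f0 i\<bar> < ee i" using that(3) dle[OF True] by fastforce
        then have "g i \<in> ball (f0 i) (ee i)" by (simp add: dist_real_def abs_minus_commute)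
        then show ?thesis using ee True by blast
      next
        case False then show ?thesis unfolding Fs_def by simp
      qed
    qed
    then have "g \<in> G" using XG GG' that(2) by blast
    ultimately show ?thesis using UG unfolding S_def by blast
  qed
  show ?thesis using oV0 cV0 V00 sym finF d0 key by blast
qed



lemma zdot_v:
  assumes "linear L1" "linear f0" "linear g'"
  shows "zdot (-a *\<^sub>R xr - c *\<^sub>R x0, \<lambda>y. -a * L1 y - c * f0 y) (x',g')
       - zdot (-a *\<^sub>R xr - c *\<^sub>R x0, \<lambda>y. -a * L1 y - c * f0 y) (x0,f0)
     = -a * (L1 (x' - x0) + g' xr - f0 xr) - c * (zdot (x0,f0) (x',g') - 2 * f0 x0)"
  unfolding zdot_def
  by (simp add: linear_diff[OF assms(1)] linear_diff[OF assms(2)] linear_diff[OF assms(3)]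
      linear_neg[OF assms(2)] linear_neg[OF assms(3)]
      linear_scale[OF assms(2)] linear_scale[OF assms(3)] algebra_simps)

lemma W_absorb:
  assumes T: "lcs T" and oV: "openin T V0" and V00: "0 \<in> V0" and finF: "finite Fs" and d0: "\<delta> > 0"
  shows "\<exists>e>0. \<forall>t. \<bar>t\<bar> < e \<longrightarrow> t *\<^sub>R fst d \<in> V0 \<and> (\<forall>i\<in>Fs. \<bar>t * snd d i\<bar> < \<delta>)"
proof -
  obtain e1 where e1: "e1 > 0" "\<forall>t. \<bar>t\<bar> < e1 \<longrightarrow> t *\<^sub>R fst d \<in> V0" using lcs_absorb[OF T oV V00] by blast
  define S where "S = (\<Sum>i\<in>Fs. \<bar>snd d i\<bar>)"
  have S0: "S \<ge> 0" unfolding S_def by (simp add: sum_nonneg)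
  define e2 where "e2 = \<delta> / (1 + S)"
  have e2: "e2 > 0" unfolding e2_def using d0 S0 by simp
  have "\<forall>t. \<bar>t\<bar> < min e1 e2 \<longrightarrow> t *\<^sub>R fst d \<in> V0 \<and> (\<forall>i\<in>Fs. \<bar>t * snd d i\<bar> < \<delta>)"
  proof (intro allI impI conjI ballI)
    fix t :: real assume t: "\<bar>t\<bar> < min e1 e2"
    then show "t *\<^sub>R fst d \<in> V0" using e1 by simp
    fix i assume i: "i \<in> Fs"
    have "\<bar>snd d i\<bar> \<le> S" unfolding S_def using member_le_sum[OF i _ finF, of "\<lambda>i. \<bar>snd d i\<bar>"] by simp
    then have "\<bar>t * snd d i\<bar> \<le> \<bar>t\<bar> * (1 + S)" by (simp add: abs_mult mult_left_mono)
    also have "\<dots> < e2 * (1 + S)" using t S0 by (intro mult_strict_right_mono) auto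
    also have "\<dots> = \<delta>" unfolding e2_def using S0 by simp
    finally show "\<bar>t * snd d i\<bar> < \<delta>" .
  qed
  then show ?thesis using e1 e2 by (intro exI[of _ "min e1 e2"]) simp
qed



lemma minorant:
  fixes x0 :: "'a::real_vector" and f0 :: "'a \<Rightarrow> real"
  assumes T: "lcs T" and hR: "h \<in> classR T" and z0Z: "(x0,f0) \<in> Zset T"
    and H: "\<forall>z'\<in>Zset T. ereal (zdot (x0,f0) z' - cpl (x0,f0)) \<le> h z'"
    and gt: "ereal (cpl (x0,f0)) < h (x0,f0)"
  shows "\<exists>v\<in>Zset T. \<exists>b>0. \<forall>z'\<in>Zset T.
           ereal (zdot (x0,f0) z' - cpl (x0,f0) + zdot v z' - zdot v (x0,f0) + b) \<le> h z'"
proof -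
  define z0 where "z0 = (x0, f0)"
  define c0 where "c0 = f0 x0"
  have cz0: "cpl z0 = c0" unfolding z0_def c0_def cpl_def by simp
  have hC: "h \<in> classC T" using hR unfolding classR_def by simp
  have hprop: "\<forall>z\<in>Zset T. h z \<noteq> -\<infinity>" and hcvx: "convex_on_Z T h"
    and hex: "\<exists>z\<in>Zset T. h z \<noteq> \<infinity>"
    using hC unfolding classC_def proper_on_def by auto
  have f0d: "f0 \<in> dual T" using z0Z unfolding Zset_def by auto
  have lf0: "linear f0" using f0d unfolding dual_def by simp
  obtain r where r1: "ereal c0 < ereal r" and r2: "ereal r < h (x0,f0)"
    using gt ereal_dense2 unfolding c0_def cpl_def by fastforce
  have rc0: "c0 < r" using r1 by simp
  obtain V0 Fs \<delta> where oV0: "openin T V0" and cV0: "convex V0" and V00: "0 \<in> V0"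
    and symV: "\<forall>y\<in>V0. -y \<in> V0" and finF: "finite Fs" and d0: "\<delta> > 0"
    and key: "\<forall>x g. x - x0 \<in> V0 \<longrightarrow> g \<in> dual T \<longrightarrow> (\<forall>i\<in>Fs. \<bar>g i - f0 i\<bar> < \<delta>) \<longrightarrow> ereal r < h (x,g)"
    using nbhd[OF T hR z0Z r2] by blast
  obtain z1 where z1Z: "z1 \<in> Zset T" and hz1: "h z1 \<noteq> \<infinity>" using hex by blast
  obtain s1 where s1: "h z1 = ereal s1" using hz1 hprop z1Z by (cases "h z1") auto
  define W where "W = {w::'a \<times> ('a \<Rightarrow> real). fst w \<in> V0 \<and> (\<forall>i\<in>Fs. \<bar>snd w i\<bar> < \<delta>)}"
  define Oset where "Oset = {p::('a \<times> ('a \<Rightarrow> real)) \<times> real. fst p \<in> W \<and> snd p < r}"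
  define Eset where "Eset = {p::('a \<times> ('a \<Rightarrow> real)) \<times> real. z0 + fst p \<in> Zset T \<and> h (z0 + fst p) \<le> ereal (snd p)}"
  have W0: "0 \<in> W" unfolding W_def using V00 d0 by simp
  have Wabs: "\<exists>e>0. \<forall>t. \<bar>t\<bar> < e \<longrightarrow> t *\<^sub>R d \<in> W" for d
    using W_absorb[OF T oV0 V00 finF d0, of d] unfolding W_def by simp
  have cW: "convex W" unfolding convex_def
  proof (intro ballI allI impI)
    fix x y :: "'a \<times> ('a \<Rightarrow> real)" and u v :: real
    assume x: "x \<in> W" and y: "y \<in> W" and uv: "0 \<le> u" "0 \<le> v" "u + v = 1"
    have 1: "fst (u *\<^sub>R x + v *\<^sub>R y) \<in> V0" using convexD[OF cV0, of "fst x" "fst y" u v] x y uv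
      unfolding W_def by simp
    have 2: "\<bar>snd (u *\<^sub>R x + v *\<^sub>R y) i\<bar> < \<delta>" if i: "i \<in> Fs" for i
    proof -
      have "\<bar>u * snd x i + v * snd y i\<bar> \<le> u * \<bar>snd x i\<bar> + v * \<bar>snd y i\<bar>"
        using uv by (metis abs_mult abs_of_nonneg abs_triangle_ineq)
      also have "\<dots> < \<delta>" using x y i uv unfolding W_def by (intro convex_bound_lt) auto
      finally show ?thesis by simp
    qed
    show "u *\<^sub>R x + v *\<^sub>R y \<in> W" unfolding W_def using 1 2 by simp
  qed
  have cO: "convex Oset" unfolding convex_def
  proof (intro ballI allI impI)
    fix x y :: "('a \<times> ('a \<Rightarrow> real)) \<times> real" and u v :: real
    assume x: "x \<in> Oset" and y: "y \<in> Oset" and uv: "0 \<le> u" "0 \<le> v" "u + v = 1"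
    have 1: "fst (u *\<^sub>R x + v *\<^sub>R y) \<in> W" using convexD[OF cW, of "fst x" "fst y" u v] x y uv
      unfolding Oset_def by simp
    have 2: "snd (u *\<^sub>R x + v *\<^sub>R y) < r" using convex_bound_lt[of "snd x" r "snd y" u v] x y uv
      unfolding Oset_def by simp
    show "u *\<^sub>R x + v *\<^sub>R y \<in> Oset" unfolding Oset_def using 1 2 by simp
  qed
  have cE: "convex Eset" unfolding convex_def
  proof (intro ballI allI impI)
    fix p1 p2 :: "('a \<times> ('a \<Rightarrow> real)) \<times> real" and u v :: real
    assume p1: "p1 \<in> Eset" and p2: "p2 \<in> Eset" and uv: "0 \<le> u" "0 \<le> v" "u + v = 1"
    consider "u = 0" | "u = 1" | "0 < u \<and> u < 1" using uv by linarith
    then show "u *\<^sub>R p1 + v *\<^sub>R p2 \<in> Eset"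
    proof cases
      case 1 then show ?thesis using p2 uv by simp
    next
      case 2 then show ?thesis using p1 uv by simp
    next
      case 3
      have v: "v = 1 - u" using uv by simp
      have Z1: "z0 + fst p1 \<in> Zset T" and Z2: "z0 + fst p2 \<in> Zset T"
        and H1: "h (z0 + fst p1) \<le> ereal (snd p1)" and H2: "h (z0 + fst p2) \<le> ereal (snd p2)"
        using p1 p2 unfolding Eset_def by auto
      have eq: "z0 + fst (u *\<^sub>R p1 + v *\<^sub>R p2) = zcomb u (z0 + fst p1) (z0 + fst p2)"
        unfolding zcomb_def v z0_def by (simp add: prod_eq_iff fun_eq_iff algebra_simps)
      obtain k1 where k1: "h (z0 + fst p1) = ereal k1" using hprop Z1 H1 by (cases "h (z0 + fst p1)") auto
      obtain k2 where k2: "h (z0 + fst p2) = ereal k2" using hprop Z2 H2 by (cases "h (z0 + fst p2)") auto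
      have "h (zcomb u (z0 + fst p1) (z0 + fst p2)) \<le> ereal u * h (z0 + fst p1) + ereal (1 - u) * h (z0 + fst p2)"
        using hcvx Z1 Z2 3 unfolding convex_on_Z_def by blast
      also have "\<dots> = ereal (u * k1 + (1-u) * k2)" using k1 k2 by simp
      also have "\<dots> \<le> ereal (u * snd p1 + (1-u) * snd p2)"
        using H1 H2 k1 k2 3 by (simp add: add_mono mult_left_mono)
      finally show ?thesis unfolding Eset_def using eq zcomb_Zset[OF Z1 Z2] v by simp
    qed
  qed
  define e0 where "e0 = (z1 - z0, s1)"
  define o0 where "o0 = ((0::'a \<times> ('a \<Rightarrow> real)), r - 1)"
  have e0E: "e0 \<in> Eset" unfolding e0_def Eset_def using z1Z s1 by simp
  have o0O: "o0 \<in> Oset" unfolding o0_def Oset_def using W0 by simp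
  define q where "q = e0 - o0"
  define Uset where "Uset = {pO - e + q | pO e. pO \<in> Oset \<and> e \<in> Eset}"
  have disj: "False" if "p \<in> Oset" "p \<in> Eset" for p
  proof -
    obtain w s where p: "p = (w, s)" by (cases p)
    have w: "fst w \<in> V0" "\<forall>i\<in>Fs. \<bar>snd w i\<bar> < \<delta>" "s < r" using that(1) unfolding p Oset_def W_def by auto
    have zw: "z0 + w \<in> Zset T" "h (z0 + w) \<le> ereal s" using that(2) unfolding p Eset_def by auto
    have eqw: "z0 + w = (x0 + fst w, f0 + snd w)" unfolding z0_def by (simp add: prod_eq_iff)
    have gd: "f0 + snd w \<in> dual T" using zw(1) unfolding eqw Zset_def by auto
    have "ereal r < h (x0 + fst w, f0 + snd w)"
      using key w gd by simp
    moreover have "h (x0 + fst w, f0 + snd w) \<le> ereal s" using zw(2) eqw by simp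
    ultimately have "ereal r < ereal s" by (rule less_le_trans)
    then show False using w(3) by simp
  qed
  have cU: "convex Uset" unfolding convex_def
  proof (intro ballI allI impI)
    fix x y and a b :: real assume x: "x \<in> Uset" and y: "y \<in> Uset" and ab: "0 \<le> a" "0 \<le> b" "a + b = 1"
    obtain o1 e1 where x': "x = o1 - e1 + q" "o1 \<in> Oset" "e1 \<in> Eset" using x unfolding Uset_def by blast
    obtain o2 e2 where y': "y = o2 - e2 + q" "o2 \<in> Oset" "e2 \<in> Eset" using y unfolding Uset_def by blast
    have "a *\<^sub>R x + b *\<^sub>R y = (a *\<^sub>R o1 + b *\<^sub>R o2) - (a *\<^sub>R e1 + b *\<^sub>R e2) + (a + b) *\<^sub>R q"
      unfolding x'(1) y'(1) by (simp add: algebra_simps)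
    moreover have "a *\<^sub>R o1 + b *\<^sub>R o2 \<in> Oset" using convexD[OF cO x'(2) y'(2)] ab by blast
    moreover have "a *\<^sub>R e1 + b *\<^sub>R e2 \<in> Eset" using convexD[OF cE x'(3) y'(3)] ab by blast
    ultimately show "a *\<^sub>R x + b *\<^sub>R y \<in> Uset" unfolding Uset_def using ab
      by (intro CollectI exI[of _ "a *\<^sub>R o1 + b *\<^sub>R o2"] exI[of _ "a *\<^sub>R e1 + b *\<^sub>R e2"]) simp
  qed
  have U0: "0 \<in> Uset" unfolding Uset_def q_def using o0O e0E
    by (intro CollectI exI[of _ o0] exI[of _ e0]) simp
  have Uabs: "\<exists>t>0. t *\<^sub>R d \<in> Uset" for d
  proof -
    obtain e where e: "e > 0" "\<forall>t. \<bar>t\<bar> < e \<longrightarrow> t *\<^sub>R fst d \<in> W" using Wabs by blast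
    define t where "t = min (e/2) (1 / (2 * (\<bar>snd d\<bar> + 1)))"
    have t0: "t > 0" unfolding t_def using e by simp
    have tW: "t *\<^sub>R fst d \<in> W" using e t0 unfolding t_def by simp
    have "t * snd d \<le> t * \<bar>snd d\<bar>" using t0 by (simp add: mult_left_mono)
    also have "\<dots> \<le> (1 / (2 * (\<bar>snd d\<bar> + 1))) * \<bar>snd d\<bar>" unfolding t_def by (intro mult_right_mono) auto
    also have "\<dots> < 1" by (simp add: field_simps)
    finally have ts: "r - 1 + t * snd d < r" by simp
    have "o0 + t *\<^sub>R d \<in> Oset" unfolding o0_def Oset_def using tW ts by simp
    moreover have "t *\<^sub>R d = (o0 + t *\<^sub>R d) - e0 + q" unfolding q_def by simp
    ultimately have "t *\<^sub>R d \<in> Uset" unfolding Uset_def using e0E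
      by (intro CollectI exI[of _ "o0 + t *\<^sub>R d"] exI[of _ e0]) simp
    then show ?thesis using t0 by blast
  qed
  have qU: "q \<notin> Uset"
  proof
    assume "q \<in> Uset"
    then obtain pO e where "q = pO - e + q" "pO \<in> Oset" "e \<in> Eset" unfolding Uset_def by blast
    then have "pO = e" by (simp add: algebra_simps)
    then show False using disj \<open>pO \<in> Oset\<close> \<open>e \<in> Eset\<close> by blast
  qed
  obtain \<Phi> :: "('a \<times> ('a \<Rightarrow> real)) \<times> real \<Rightarrow> real" where lP: "linear \<Phi>" and Pq: "\<Phi> q = 1"
    and PU: "\<forall>u\<in>Uset. \<Phi> u \<le> 1"
    using hb_sep[OF cU U0 Uabs qU] by blast
  have sep: "\<Phi> pO \<le> \<Phi> e" if "pO \<in> Oset" "e \<in> Eset" for pO e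
  proof -
    have "pO - e + q \<in> Uset" unfolding Uset_def using that by blast
    then have "\<Phi> (pO - e + q) \<le> 1" using PU by blast
    then show ?thesis using Pq by (simp add: linear_add[OF lP] linear_diff[OF lP])
  qed
  define \<Lambda> where "\<Lambda> w = \<Phi> (w, 0)" for w
  define \<beta> where "\<beta> = \<Phi> (0, 1)"
  have Pdec: "\<Phi> (w, s) = \<Lambda> w + s * \<beta>" for w s
  proof -
    have "(w, s) = (w, 0) + s *\<^sub>R (0, 1)" by simp
    then show ?thesis unfolding \<Lambda>_def \<beta>_def by (metis linear_add[OF lP] linear_scale[OF lP] real_scaleR_def)
  qed
  have lL: "linear \<Lambda>"
  proof (rule linearI)
    show "\<Lambda> (x + y) = \<Lambda> x + \<Lambda> y" for x y
      unfolding \<Lambda>_def using linear_add[OF lP, of "(x,0)" "(y,0)"] by simp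
    show "\<Lambda> (c *\<^sub>R x) = c *\<^sub>R \<Lambda> x" for c x
      unfolding \<Lambda>_def using linear_scale[OF lP, of c "(x,0)"] by simp
  qed
  have L00: "\<Lambda> 0 = 0" using lL by (rule linear_0)
  have dom: "\<Phi> pO \<le> \<Lambda> (z' - z0) + hz * \<beta>" if "pO \<in> Oset" "z' \<in> Zset T" "h z' = ereal hz" for pO z' hz
  proof -
    have "(z' - z0, hz) \<in> Eset" unfolding Eset_def using that by simp
    then have "\<Phi> pO \<le> \<Phi> (z' - z0, hz)" by (rule sep[OF that(1)])
    then show ?thesis by (simp only: Pdec)
  qed
  have bnn: "\<beta> \<ge> 0"
  proof (rule ccontr)
    assume "\<not> \<beta> \<ge> 0"
    then have bn: "\<beta> < 0" by simp
    define A where "A = \<Lambda> (z1 - z0) + s1 * \<beta> - \<Phi> o0"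
    define s where "s = s1 + (\<bar>A\<bar> + 1) / (- \<beta>)"
    have "(z1 - z0, s) \<in> Eset" unfolding Eset_def s_def using z1Z s1 bn
      by (simp add: field_simps)
    then have "\<Phi> o0 \<le> \<Phi> (z1 - z0, s)" by (rule sep[OF o0O])
    then have "\<Phi> o0 \<le> \<Lambda> (z1 - z0) + s * \<beta>" by (simp only: Pdec)
    moreover have "s * \<beta> = s1 * \<beta> - (\<bar>A\<bar> + 1)" unfolding s_def using bn by (simp add: field_simps)
    ultimately show False unfolding A_def by linarith
  qed
  define M where "M = \<Phi> e0 - (r - 1) * \<beta>"
  have bndW: "\<Lambda> w \<le> M" if "w \<in> W" for w
  proof -
    have "(w, r - 1) \<in> Oset" unfolding Oset_def using that by simp
    then have "\<Phi> (w, r-1) \<le> \<Phi> e0" using sep e0E by blast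
    then show ?thesis unfolding M_def using Pdec by simp
  qed
  define L2 where "L2 g = \<Lambda> (0, g)" for g
  have lL2: "linear L2"
  proof (rule linearI)
    show "L2 (x + y) = L2 x + L2 y" for x y
      unfolding L2_def using linear_add[OF lL, of "(0,x)" "(0,y)"] by simp
    show "L2 (c *\<^sub>R x) = c *\<^sub>R L2 x" for c x
      unfolding L2_def using linear_scale[OF lL, of c "(0,x)"] by simp
  qed
  have L2van: "L2 g = 0" if "\<forall>i\<in>Fs. g i = 0" for g
  proof (rule ccontr)
    assume ne: "L2 g \<noteq> 0"
    define t where "t = (\<bar>M\<bar> + 1) / L2 g"
    have "(0, t *\<^sub>R g) \<in> W" unfolding W_def using V00 that d0 by simp
    then have "L2 (t *\<^sub>R g) \<le> M" using bndW unfolding L2_def by blast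
    moreover have "L2 (t *\<^sub>R g) = \<bar>M\<bar> + 1" unfolding t_def using ne by (simp add: linear_scale[OF lL2])
    ultimately show False by linarith
  qed
  define ind where "ind i = (\<lambda>y::'a. if y = i then (1::real) else 0)" for i
  define xr where "xr = (\<Sum>i\<in>Fs. L2 (ind i) *\<^sub>R i)"
  have repr: "L2 g = g xr" if lg: "linear g" for g
  proof -
    define \<psi> where "\<psi> = (\<Sum>i\<in>Fs. g i *\<^sub>R ind i)"
    have psi_at: "\<psi> j = g j" if "j \<in> Fs" for j
    proof -
      have "\<psi> j = (\<Sum>i\<in>Fs. g i * (if j = i then 1 else 0))"
        unfolding \<psi>_def using finF by (simp add: sum_fun_apply ind_def)
      also have "\<dots> = (\<Sum>i\<in>Fs. if j = i then g i else 0)" by (rule sum.cong) auto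
      also have "\<dots> = g j" using that finF by simp
      finally show ?thesis .
    qed
    have "L2 (g - \<psi>) = 0" using psi_at by (intro L2van) simp
    then have "L2 g = L2 \<psi>" by (simp add: linear_diff[OF lL2])
    also have "\<dots> = (\<Sum>i\<in>Fs. g i * L2 (ind i))" unfolding \<psi>_def
      by (simp add: linear_sum[OF lL2] linear_scale[OF lL2])
    also have "\<dots> = g xr" unfolding xr_def by (simp add: linear_sum[OF lg] linear_scale[OF lg] mult.commute)
    finally show ?thesis .
  qed
  define L1 where "L1 y = \<Lambda> (y, 0)" for y
  have lL1: "linear L1"
  proof (rule linearI)
    show "L1 (x + y) = L1 x + L1 y" for x y
      unfolding L1_def using linear_add[OF lL, of "(x,0)" "(y,0)"] by simp
    show "L1 (c *\<^sub>R x) = c *\<^sub>R L1 x" for c x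
      unfolding L1_def using linear_scale[OF lL, of c "(x,0)"] by simp
  qed
  have L1b: "\<bar>L1 y\<bar> \<le> M" if "y \<in> V0" for y
  proof -
    have "(y, 0) \<in> W" "(-y, 0) \<in> W" unfolding W_def using that symV d0 by auto
    then have "L1 y \<le> M" "L1 (-y) \<le> M" using bndW unfolding L1_def by auto
    then show ?thesis by (simp add: linear_neg[OF lL1])
  qed
  have L1d: "L1 \<in> dual T" unfolding dual_def
    using lL1 bounded_lin_cont[OF T lL1 oV0 V00] L1b by blast
  have Ldec: "\<Lambda> (z' - z0) = L1 (x' - x0) + g' xr - f0 xr" if "z' = (x', g')" "g' \<in> dual T" for z' x' g'
  proof -
    have "z' - z0 = (x' - x0, 0) + (0, g' - f0)" unfolding that z0_def by simp
    then have "\<Lambda> (z' - z0) = L1 (x' - x0) + L2 (g' - f0)"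
      unfolding L1_def L2_def by (simp only: linear_add[OF lL])
    moreover have "linear g'" using that(2) unfolding dual_def by simp
    ultimately show ?thesis by (simp add: linear_diff[OF lL2] repr lf0)
  qed
  have vZ: "(-a *\<^sub>R xr - c *\<^sub>R x0, \<lambda>y. -a * L1 y - c * f0 y) \<in> Zset T" for a c
    using dual_comb[OF L1d f0d, of "-a" "-c"] unfolding Zset_def by simp
  show ?thesis
  proof (cases "\<beta> > 0")
    case True
    define v where "v = (-(1/\<beta>) *\<^sub>R xr - 1 *\<^sub>R x0, \<lambda>y. -(1/\<beta>) * L1 y - 1 * f0 y)"
    show ?thesis
    proof (intro bexI exI conjI ballI)
      show "v \<in> Zset T" unfolding v_def by (rule vZ)
      show "r - c0 > 0" using rc0 by simp
      fix z' assume z'Z: "z' \<in> Zset T"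
      obtain x' g' where z': "z' = (x', g')" by (cases z')
      have g'd: "g' \<in> dual T" using z'Z unfolding z' Zset_def by auto
      have lg': "linear g'" using g'd unfolding dual_def by simp
      show "ereal (zdot (x0,f0) z' - cpl (x0,f0) + zdot v z' - zdot v (x0,f0) + (r - c0)) \<le> h z'"
      proof (cases "h z'")
        case (real hz)
        have A: "s * \<beta> \<le> \<Lambda> (z' - z0) + hz * \<beta>" if "s < r" for s
        proof -
          have "(0, s) \<in> Oset" unfolding Oset_def using W0 that by simp
          then have "\<Phi> (0, s) \<le> \<Lambda> (z' - z0) + hz * \<beta>" by (rule dom[OF _ z'Z real])
          moreover have "\<Phi> (0, s) = s * \<beta>" by (simp only: Pdec L00)
          ultimately show ?thesis by simp
        qed
        have "r * \<beta> \<le> \<Lambda> (z' - z0) + hz * \<beta>"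
        proof (rule ccontr)
          assume "\<not> ?thesis"
          then have lt: "\<Lambda> (z' - z0) + hz * \<beta> < r * \<beta>" by simp
          define s where "s = ((\<Lambda> (z' - z0) + hz * \<beta>) / \<beta> + r) / 2"
          have "(\<Lambda> (z' - z0) + hz * \<beta>) / \<beta> < r" using lt True by (simp add: pos_divide_less_eq)
          then have "s < r" unfolding s_def by simp
          moreover have "s * \<beta> = ((\<Lambda> (z' - z0) + hz * \<beta>) + r * \<beta>) / 2" unfolding s_def using True
            by (simp add: field_simps)
          then have "s * \<beta> > \<Lambda> (z' - z0) + hz * \<beta>" using lt by simp
          ultimately show False using A by fastforce
        qed
        then have hzb: "r - \<Lambda> (z' - z0) / \<beta> \<le> hz" using True by (simp add: field_simps)
        have e1: "zdot v z' - zdot v (x0,f0) = -(1/\<beta>) * (L1 (x' - x0) + g' xr - f0 xr) - 1 * (zdot (x0,f0) (x',g') - 2 * f0 x0)"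
          unfolding v_def z' by (rule zdot_v[OF lL1 lf0 lg'])
        have e2: "\<Lambda> (z' - z0) = L1 (x' - x0) + g' xr - f0 xr" using Ldec[OF z' g'd] .
        have "zdot (x0,f0) z' - cpl (x0,f0) + zdot v z' - zdot v (x0,f0) + (r - c0) = r - \<Lambda> (z' - z0) / \<beta>"
          unfolding e2 using e1 unfolding z' cpl_def c0_def by (simp add: field_simps)
        then show ?thesis using hzb real by simp
      next
        case PInf then show ?thesis by simp
      next
        case MInf then show ?thesis using hprop z'Z by simp
      qed
    qed
  next
    case False
    then have b0: "\<beta> = 0" using bnn by simp
    have "\<Phi> q = \<Lambda> (z1 - z0)" unfolding q_def e0_def o0_def
      using Pdec[of "z1 - z0 - 0" "s1 - (r - 1)"] b0 by simp
    then have Ld: "\<Lambda> (z1 - z0) = 1" using Pq by simp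
    obtain e where e: "e > 0" "\<forall>t. \<bar>t\<bar> < e \<longrightarrow> t *\<^sub>R (z1 - z0) \<in> W" using Wabs by blast
    define t where "t = e / 2"
    have t0: "t > 0" unfolding t_def using e by simp
    have "(t *\<^sub>R (z1 - z0), r - 1) \<in> Oset" unfolding Oset_def using e t0 unfolding t_def by simp
    moreover have "\<Phi> (t *\<^sub>R (z1 - z0), r - 1) = t" using Pdec b0 Ld by (simp add: linear_scale[OF lL])
    ultimately have tle: "t \<le> \<Lambda> (z' - z0)" if "z' \<in> Zset T" "h z' = ereal hz" for z' hz
      using dom[OF _ that, of "(t *\<^sub>R (z1 - z0), r - 1)"] b0 by simp
    define v where "v = (-1 *\<^sub>R xr - 0 *\<^sub>R x0, \<lambda>y. -1 * L1 y - 0 * f0 y)"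
    show ?thesis
    proof (intro bexI exI conjI ballI)
      show "v \<in> Zset T" unfolding v_def by (rule vZ)
      show "t > 0" by (rule t0)
      fix z' assume z'Z: "z' \<in> Zset T"
      obtain x' g' where z': "z' = (x', g')" by (cases z')
      have g'd: "g' \<in> dual T" using z'Z unfolding z' Zset_def by auto
      have lg': "linear g'" using g'd unfolding dual_def by simp
      show "ereal (zdot (x0,f0) z' - cpl (x0,f0) + zdot v z' - zdot v (x0,f0) + t) \<le> h z'"
      proof (cases "h z'")
        case (real hz)
        have h1: "zdot (x0,f0) z' - cpl (x0,f0) \<le> hz" using H z'Z real by force
        have e1: "zdot v z' - zdot v (x0,f0) = -1 * (L1 (x' - x0) + g' xr - f0 xr) - 0 * (zdot (x0,f0) (x',g') - 2 * f0 x0)"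
          unfolding v_def z' by (rule zdot_v[OF lL1 lf0 lg'])
        have e2: "\<Lambda> (z' - z0) = L1 (x' - x0) + g' xr - f0 xr" using Ldec[OF z' g'd] .
        have "zdot v z' - zdot v (x0,f0) = - \<Lambda> (z' - z0)" unfolding e2 using e1 by simp
        moreover have "t \<le> \<Lambda> (z' - z0)" using tle[OF z'Z real] .
        ultimately show ?thesis using h1 real by simp
      next
        case PInf then show ?thesis by simp
      next
        case MInf then show ?thesis using hprop z'Z by simp
      qed
    qed
  qed
qed



lemma part2:
  assumes T: "lcs T" and hD: "h \<in> classD T" and zZ: "z \<in> Zset T" and sq: "sqconj T h z = ereal (cpl z)"
  shows "h z = ereal (cpl z)"
proof (rule ccontr)
  assume ne: "h z \<noteq> ereal (cpl z)"
  obtain x0 f0 where z: "z = (x0, f0)" by (cases z)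
  have hR: "h \<in> classR T" using hD unfolding classD_def by simp
  have ge: "ereal (cpl z) \<le> h z" using hR zZ unfolding classR_def classC_def by auto
  have gt: "ereal (cpl (x0,f0)) < h (x0,f0)" using ge ne unfolding z by simp
  have H: "\<forall>z'\<in>Zset T. ereal (zdot (x0,f0) z' - cpl (x0,f0)) \<le> h z'"
  proof
    fix z' assume z'Z: "z' \<in> Zset T"
    have "ereal (zdot z z') - h z' \<le> sqconj T h z" unfolding sqconj_def using z'Z by (rule SUP_upper)
    then have le: "ereal (zdot z z') - h z' \<le> ereal (cpl z)" using sq by simp
    show "ereal (zdot (x0,f0) z' - cpl (x0,f0)) \<le> h z'"
    proof (cases "h z'")
      case (real hh) then show ?thesis using le unfolding z by simp
    next
      case PInf then show ?thesis by simp
    next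
      case MInf then show ?thesis using le by simp
    qed
  qed
  obtain v b where vZ: "v \<in> Zset T" and b: "b > 0"
    and Mi: "\<forall>z'\<in>Zset T. ereal (zdot (x0,f0) z' - cpl (x0,f0) + zdot v z' - zdot v (x0,f0) + b) \<le> h z'"
    using minorant[OF T hR zZ[unfolded z] H gt] by blast
  show False using part2_contra[OF hD zZ[unfolded z] vZ b H Mi] .
qed

theorem lemma1p1:
  fixes T :: "'a::real_vector topology"
    and h :: "'a \<times> ('a \<Rightarrow> real) \<Rightarrow> ereal"
  assumes "lcs T"
    and "\<exists>x::'a. x \<noteq> 0"
    and "h \<in> classC T"
  shows "eqset T h (\<lambda>z. ereal (cpl z)) \<subseteq> eqset T (sqconj T h) (\<lambda>z. ereal (cpl z))
         \<and> (h \<in> classD T \<longrightarrow>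
              eqset T h (\<lambda>z. ereal (cpl z)) = eqset T (sqconj T h) (\<lambda>z. ereal (cpl z)))"
proof -
  have sub: "eqset T h (\<lambda>z. ereal (cpl z)) \<subseteq> eqset T (sqconj T h) (\<lambda>z. ereal (cpl z))"
    unfolding eqset_def using part1[OF assms(3)] by auto
  moreover have "eqset T (sqconj T h) (\<lambda>z. ereal (cpl z)) \<subseteq> eqset T h (\<lambda>z. ereal (cpl z))"
    if "h \<in> classD T"
    unfolding eqset_def using part2[OF assms(1) that] by auto
  ultimately show ?thesis by blast
qed

end
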